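(* Given $f:\{0,1\}^n\to\mathbb{R}$, there exists $g:\{0,1\}^{n+1}\to\mathbb{R}$ such that: (1) if $f$ is monotonically non-increasing, then $g$ is submodular; (2) if $f$ is $\epsilon$-far from being monotonically non-increasing, then $g$ is $\epsilon/2$-far from being submodular; (3) each value $g(z)$ can be computed by looking at (at most) $2$ values of $f$.
   Context: $f$ is monotonically non-increasing if $f(x)\ge f(y)$ whenever $x\le y$ coordinatewise. $g$ is submodular if $g(x+\mathbf{e}_i)-g(x)\ge g(y+\mathbf{e}_i)-g(y)$ for all $i$ and $x\le y$ with $x_i=y_i=0$, where $\mathbf{e}_i$ is the $i$-th standard basis vector. A function on a hypercube $\{0,1\}^m$ is $\epsilon$-far from a property if every function with the property differs from it on more than an $\epsilon$ fraction of the $2^m$ points. *)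

theory Defs
  imports Complex_Main
begin

text \<open>The hypercube {0,1}^n, a point being identified with the set of
coordinates (in {0..n-1}) equal to 1. Coordinatewise order is inclusion,
and x + e_i (for x_i = 0) is insert i x.\<close>
definition cube :: "nat \<Rightarrow> nat set set" where
  "cube n = Pow {..<n}"

definition mono_nonincr :: "nat \<Rightarrow> (nat set \<Rightarrow> real) \<Rightarrow> bool" where
  "mono_nonincr n f \<longleftrightarrow> (\<forall>x\<in>cube n. \<forall>y\<in>cube n. x \<subseteq> y \<longrightarrow> f y \<le> f x)"

definition submodular :: "nat \<Rightarrow> (nat set \<Rightarrow> real) \<Rightarrow> bool" where
  "submodular n g \<longleftrightarrow> (\<forall>i<n. \<forall>x\<in>cube n. \<forall>y\<in>cube n. x \<subseteq> y \<and> i \<notin> y \<longrightarrow>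
      g (insert i x) - g x \<ge> g (insert i y) - g y)"

definition far :: "nat \<Rightarrow> ((nat set \<Rightarrow> real) \<Rightarrow> bool) \<Rightarrow> real \<Rightarrow> (nat set \<Rightarrow> real) \<Rightarrow> bool" where
  "far n P eps f \<longleftrightarrow> (\<forall>h. P h \<longrightarrow> real (card {x\<in>cube n. f x \<noteq> h x}) > eps * 2 ^ n)"

end

theory Submission
  imports Defs
begin

definition gG :: "nat \<Rightarrow> (nat set \<Rightarrow> real) \<Rightarrow> nat set \<Rightarrow> real" where
  "gG n f S = -4 * (real (card (S - {n})))^2 + (if n \<in> S then arctan (f (S - {n})) else 0)"

lemma finite_cube: "finite (cube n)"
  by (simp add: cube_def)

lemma cube_fin: "x \<in> cube n \<Longrightarrow> finite x"
  unfolding cube_def by (auto intro: finite_subset)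

lemma marg:
  assumes "i \<noteq> n" "i \<notin> S" "finite S"
  shows "gG n f (insert i S) - gG n f S = -4*(2*real (card (S-{n}))+1) +
     (if n\<in>S then arctan (f (insert i (S-{n}))) - arctan (f (S-{n})) else 0)"
proof -
  have e: "insert i S - {n} = insert i (S - {n})" using assms by auto
  have c: "card (insert i (S - {n})) = card (S-{n}) + 1" using assms by simp
  show ?thesis unfolding gG_def e c using assms by (simp add: power2_eq_square algebra_simps)
qed

lemma arctan_diff: "\<bar>arctan a - arctan b\<bar> < 4"
  using arctan_bounded[of a] arctan_bounded[of b] pi_less_4 by auto

lemma part1:
  assumes mono: "mono_nonincr n f"
  shows "submodular (Suc n) (gG n f)"
  unfolding submodular_def
proof (intro allI impI ballI)
  fix i S T assume i: "i < Suc n" and S: "S \<in> cube (Suc n)" and T: "T \<in> cube (Suc n)"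
    and ST: "S \<subseteq> T \<and> i \<notin> T"
  define x where "x = S - {n}"
  define y where "y = T - {n}"
  have xc: "x \<in> cube n" using S unfolding x_def cube_def by auto
  have yc: "y \<in> cube n" using T unfolding y_def cube_def by auto
  have xy: "x \<subseteq> y" using ST unfolding x_def y_def by auto
  have fS: "finite S" "finite T" using S T cube_fin by auto
  show "gG n f (insert i T) - gG n f T \<le> gG n f (insert i S) - gG n f S"
  proof (cases "i = n")
    case True
    have "n \<notin> S" "n \<notin> T" using ST True by auto
    then have "insert n S - {n} = x" "S - {n} = x" "insert n T - {n} = y" "T - {n} = y"
      unfolding x_def y_def by auto
    then have "gG n f (insert i T) - gG n f T = arctan (f y)"
      "gG n f (insert i S) - gG n f S = arctan (f x)"
      using \<open>n \<notin> S\<close> \<open>n \<notin> T\<close> True unfolding gG_def by auto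
    moreover have "f y \<le> f x" using mono xc yc xy unfolding mono_nonincr_def by auto
    ultimately show ?thesis by (simp add: arctan_le_iff)
  next
    case False
    have iS: "i \<notin> S" using ST by auto
    have ix: "insert i x \<in> cube n" "insert i y \<in> cube n"
      using xc yc i False unfolding cube_def by auto
    note mS = marg[OF False iS fS(1), of f, folded x_def]
    note mT = marg[OF False _ fS(2), of f, folded y_def]
    have cle: "card x \<le> card y" using xy yc cube_fin card_mono by blast
    show ?thesis
    proof (cases "card x < card y")
      case True
      have "real (card x) + 1 \<le> real (card y)" using True by simp
      then show ?thesis using mS mT ST
        arctan_diff[of "f (insert i x)" "f x"] arctan_diff[of "f (insert i y)" "f y"]
        by (auto split: if_splits)
    next
      case False
      then have "card x = card y" using cle by simp
      then have "x = y" using xy yc cube_fin card_subset_eq by blast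
      have "f (insert i x) \<le> f x" using mono ix xc unfolding mono_nonincr_def by auto
      then have a: "arctan (f (insert i x)) - arctan (f x) \<le> 0" by (simp add: arctan_le_iff)
      show ?thesis
      proof (cases "n \<in> S")
        case True
        then have "n \<in> T" using ST by auto
        then show ?thesis using mS mT True ST \<open>x = y\<close> by auto
      next
        case nS: False
        show ?thesis using mS mT nS ST \<open>x = y\<close> a by auto
      qed
    qed
  qed
qed

lemma part2:
  assumes far: "far n (mono_nonincr n) eps f"
  shows "far (Suc n) (submodular (Suc n)) (eps / 2) (gG n f)"
  unfolding far_def
proof (intro allI impI)
  fix h' assume sub: "submodular (Suc n) h'"
  define D where "D = {S \<in> cube (Suc n). gG n f S \<noteq> h' S}"
  define K where "K = Max ((\<lambda>x. \<bar>f x\<bar>) ` cube n)"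
  define Psi where "Psi s = (if s \<le> -(pi/2) then -K else if s \<ge> pi/2 then K
      else max (-K) (min K (tan s)))" for s
  define f' where "f' x = Psi (h' (insert n x) - h' x)" for x
  have K: "\<bar>f x\<bar> \<le> K" if "x \<in> cube n" for x
    unfolding K_def using that finite_cube by (intro Max_ge) auto
  have Kpos: "0 \<le> K" using K[of "{}"] by (auto simp: cube_def)
  have Psi_mono: "Psi s \<le> Psi t" if "s \<le> t" for s t
  proof -
    have "-(pi/2) < s \<Longrightarrow> t < pi/2 \<Longrightarrow> tan s \<le> tan t" using tan_mono_le that by blast
    then show ?thesis unfolding Psi_def using that Kpos by auto
  qed
  have Psi_arctan: "Psi (arctan a) = a" if "\<bar>a\<bar> \<le> K" for a
    unfolding Psi_def using arctan_bounded[of a] that by (auto simp: tan_arctan)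
  have "mono_nonincr n f'"
    unfolding mono_nonincr_def
  proof (intro ballI impI)
    fix x y assume x: "x \<in> cube n" and y: "y \<in> cube n" and xy: "x \<subseteq> y"
    have "x \<in> cube (Suc n)" "y \<in> cube (Suc n)" "n \<notin> y" using x y unfolding cube_def by auto
    then have "h' (insert n y) - h' y \<le> h' (insert n x) - h' x"
      using sub xy unfolding submodular_def by blast
    then show "f' y \<le> f' x" unfolding f'_def by (rule Psi_mono)
  qed
  then have big: "real (card {x\<in>cube n. f x \<noteq> f' x}) > eps * 2 ^ n"
    using far unfolding far_def by blast
  have sub2: "{x\<in>cube n. f x \<noteq> f' x} \<subseteq> (\<lambda>S. S - {n}) ` D"
  proof
    fix x assume "x \<in> {x\<in>cube n. f x \<noteq> f' x}"
    then have x: "x \<in> cube n" and ne: "f x \<noteq> f' x" by auto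
    have nx: "n \<notin> x" using x unfolding cube_def by auto
    have xc: "x \<in> cube (Suc n)" "insert n x \<in> cube (Suc n)" using x unfolding cube_def by auto
    have e1: "insert n x - {n} = x" "x - {n} = x" using nx by auto
    show "x \<in> (\<lambda>S. S - {n}) ` D"
    proof (cases "gG n f x = h' x \<and> gG n f (insert n x) = h' (insert n x)")
      case True
      have "h' (insert n x) - h' x = gG n f (insert n x) - gG n f x" using True by simp
      also have "\<dots> = arctan (f x)" unfolding gG_def e1 using nx by simp
      finally have "f' x = f x" unfolding f'_def using Psi_arctan K[OF x] by simp
      then show ?thesis using ne by simp
    next
      case False
      then have "x \<in> D \<or> insert n x \<in> D" unfolding D_def using xc by auto
        then show ?thesis using e1 by (metis image_eqI)
    qed
  qed
  have fD: "finite D" unfolding D_def using finite_cube by simp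
  have "card {x\<in>cube n. f x \<noteq> f' x} \<le> card ((\<lambda>S. S - {n}) ` D)"
    using sub2 fD by (intro card_mono) auto
  also have "\<dots> \<le> card D" by (rule card_image_le[OF fD])
  finally have "eps * 2 ^ n < real (card D)" using big by linarith
  then show "real (card {x \<in> cube (Suc n). gG n f x \<noteq> h' x}) > eps / 2 * 2 ^ Suc n"
    unfolding D_def by simp
qed

theorem lemma11:
  fixes n :: nat
  shows "\<exists>G :: (nat set \<Rightarrow> real) \<Rightarrow> (nat set \<Rightarrow> real).
    (\<forall>f. mono_nonincr n f \<longrightarrow> submodular (Suc n) (G f)) \<and>
    (\<forall>f eps. far n (mono_nonincr n) eps f \<longrightarrow> far (Suc n) (submodular (Suc n)) (eps / 2) (G f)) \<and>
    (\<forall>z\<in>cube (Suc n). \<exists>p\<in>cube n. \<exists>q\<in>cube n. \<exists>h :: real \<Rightarrow> real \<Rightarrow> real.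
        \<forall>f. G f z = h (f p) (f q))"
proof (intro exI[of _ "gG n"] conjI allI impI ballI)
  fix f assume "mono_nonincr n f" then show "submodular (Suc n) (gG n f)" by (rule part1)
next
  fix f eps assume "far n (mono_nonincr n) eps f"
  then show "far (Suc n) (submodular (Suc n)) (eps / 2) (gG n f)" by (rule part2)
next
  fix z assume z: "z \<in> cube (Suc n)"
  have p: "z - {n} \<in> cube n" using z unfolding cube_def by auto
  show "\<exists>p\<in>cube n. \<exists>q\<in>cube n. \<exists>h :: real \<Rightarrow> real \<Rightarrow> real. \<forall>f. gG n f z = h (f p) (f q)"
    by (rule bexI[OF _ p], rule bexI[OF _ p],
        rule exI[of _ "\<lambda>a b. -4 * (real (card (z - {n})))^2 + (if n \<in> z then arctan a else 0)"])
       (simp add: gG_def)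
qed

end
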